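(* Let $h$ and $k$ be relatively prime integers with $k>0$ and $h+k$ odd. Then $$B_{1}(h,k)=\frac{1-h}{2k}\sum_{j=1}^{k}\tan\left(\frac{\pi h(2j-1)}{2k}\right)\cot\left(\frac{\pi(2j-1)}{2k}\right).$$
   Context: $[x]$ denotes the greatest integer $\le x$. For integers $h,k$ with $k>0$ and $\gcd(h,k)=1$, $$B_{1}(h,k)=\sum_{j=1}^{k-1}(-1)^{j+\left[\frac{hj}{k}\right]}\left[\frac{hj}{k}\right].$$ *)

theory Defs
  imports Complex_Main
begin

text \<open>B_1(h,k); the sign (-1)^e for integer e is written (-1)^nat|e|.\<close>
definition B1 :: "int \<Rightarrow> int \<Rightarrow> int" where
  "B1 h k = (\<Sum>j\<in>{1..k-1}. (-1) ^ nat \<bar>j + \<lfloor>real_of_int (h*j) / real_of_int k\<rfloor>\<bar>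
                 * \<lfloor>real_of_int (h*j) / real_of_int k\<rfloor>)"

end

theory Submission
  imports Defs
begin


definition sg :: "int \<Rightarrow> int" where "sg n = (if even n then 1 else -1)"

lemma sg_add: "sg (a + b) = sg a * sg b" by (auto simp: sg_def)
lemma pow_sg: "(-1::int) ^ nat \<bar>n\<bar> = sg n"
proof -
  have "even (nat \<bar>n\<bar>) = even n" by (simp add: even_nat_iff)
  thus ?thesis by (simp add: sg_def)
qed

lemma cis_ipi: "cis (pi * of_int n) = (if even n then 1 else -1)"
  by (simp add: complex_eq_iff)

lemma cis_double_p1: "cis (2*y) + 1 = 2 * of_real (cos y) * cis y"
proof -
  have a: "cos (2*y) = cos y ^ 2 - sin y ^ 2" "sin (2*y) = 2 * sin y * cos y"
    by (simp_all add: cos_double sin_double)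
  have b: "sin y ^ 2 + cos y ^ 2 = 1" by simp
  show ?thesis
  proof (rule complex_eqI)
    show "Re (cis (2 * y) + 1) = Re (2 * complex_of_real (cos y) * cis y)"
      using a(1) b by (simp add: power2_eq_square)
    show "Im (cis (2 * y) + 1) = Im (2 * complex_of_real (cos y) * cis y)"
      using a(2) by simp
  qed
qed
lemma cis_double_m1: "cis (2*y) - 1 = 2 * \<i> * of_real (sin y) * cis y"
proof -
  have a: "cos (2*y) = cos y ^ 2 - sin y ^ 2" "sin (2*y) = 2 * sin y * cos y"
    by (simp_all add: cos_double sin_double)
  have b: "sin y ^ 2 + cos y ^ 2 = 1" by simp
  show ?thesis
  proof (rule complex_eqI)
    show "Re (cis (2 * y) - 1) = Re (2 * \<i> * complex_of_real (sin y) * cis y)"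
      using a(1) b by (simp add: power2_eq_square)
    show "Im (cis (2 * y) - 1) = Im (2 * \<i> * complex_of_real (sin y) * cis y)"
      using a(2) by simp
  qed
qed

lemma Esum:
  fixes K :: nat and N :: int
  assumes K: "K > 0"
  shows "(\<Sum>i<K. cis (pi * real (2*i+1) * of_int N / real K)) =
     (if int K dvd N then of_nat K * of_int (sg (N div int K)) else 0)"
proof (cases "int K dvd N")
  case True
  then obtain t where t: "N = int K * t" by blast
  have "cis (pi * real (2*i+1) * of_int N / real K) = of_int (sg t)" for i
  proof -
    have e: "pi * real (2*i+1) * of_int N / real K = pi * of_int ((2*int i+1)*t)"
      using K by (simp add: t field_simps)
    have "even ((2*int i+1)*t) = even t" by simp
    then show ?thesis unfolding e cis_ipi by (simp add: sg_def)
  qed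
  then show ?thesis using True t K by simp
next
  case False
  define q where "q = cis (2*pi*of_int N / real K)"
  have trm: "cis (pi * real (2*i+1) * of_int N / real K) = cis (pi * of_int N / real K) * q ^ i" for i
    unfolding q_def DeMoivre cis_mult by (rule arg_cong[where f=cis]) (simp add: field_simps add_divide_distrib)
  have q1: "q \<noteq> 1"
  proof
    assume "q = 1"
    hence "cos (2*pi*of_int N / real K) = 1" unfolding q_def by (simp add: complex_eq_iff)
    then obtain n :: int where n: "2*pi*of_int N / real K = of_int n * 2 * pi"
      by (auto simp: cos_one_2pi_int)
    hence "of_int N = real_of_int n * real K" using K by (simp add: field_simps)
    hence "N = n * int K" by (metis of_int_eq_iff of_int_mult of_int_of_nat_eq)
    thus False using False by simp
  qed
  have qK: "q ^ K = 1" unfolding q_def DeMoivre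
  proof -
    have "real K * (2 * pi * of_int N / real K) = 2*pi* of_int N" using K by simp
    thus "cis (real K * (2 * pi * of_int N / real K)) = 1" by simp
  qed
  have "(\<Sum>i<K. cis (pi * real (2*i+1) * of_int N / real K)) = cis (pi * of_int N / real K) * (\<Sum>i<K. q^i)"
    by (simp only: trm sum_distrib_left)
  also have "\<dots> = 0" using q1 qK by (simp add: geometric_sum)
  finally show ?thesis using False by simp
qed

lemma sum_split0: "K > 0 \<Longrightarrow> sum f {..<K} = f 0 + sum f {1..<(K::nat)}"
  by (simp add: lessThan_atLeast0 sum.atLeast_Suc_lessThan)

lemma expand:
  fixes x :: real and h :: int and K :: nat
  assumes K: "K > 0" and c: "cos (of_int h * x) \<noteq> 0" and s: "sin x \<noteq> 0"
    and uK: "(- cis (2*(of_int h*x)))^K = -1" and wK: "cis (2*x)^K = -1"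
  shows "complex_of_real (tan (of_int h * x) * cot x) =
     (\<Sum>m\<in>{1..<K}. (- cis (2*(of_int h*x)))^m) * (\<Sum>n\<in>{1..<K}. cis (2*x)^n)"
proof -
  define y where "y = of_int h * x"
  define u where "u = cis (2*y)"
  define w where "w = cis (2*x)"
  have u1: "u + 1 = 2 * of_real (cos y) * cis y" unfolding u_def by (rule cis_double_p1)
  have um: "u - 1 = 2 * \<i> * of_real (sin y) * cis y" unfolding u_def by (rule cis_double_m1)
  have w1: "w + 1 = 2 * of_real (cos x) * cis x" unfolding w_def by (rule cis_double_p1)
  have wm: "w - 1 = 2 * \<i> * of_real (sin x) * cis x" unfolding w_def by (rule cis_double_m1)
  have cy: "complex_of_real (cos y) \<noteq> 0" using c y_def by simp
  have sx: "complex_of_real (sin x) \<noteq> 0" using s by simp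
  have u1n: "u + 1 \<noteq> 0" using u1 cy by simp
  have wmn: "w - 1 \<noteq> 0" using wm sx by simp
  have nu: "- u \<noteq> 1" using u1n by (metis add.inverse_inverse neg_eq_iff_add_eq_0)
  have w1': "w \<noteq> 1" using wmn by simp
  have sa: "(\<Sum>m<K. (-u)^m) = 2/(u+1)"
  proof -
    have "(-u)^K = -1" using uK by (simp add: u_def y_def)
    moreover have "- (2 / (- u - 1)) = 2 / (u + 1)"
    proof -
      have "- u - 1 = -(u+1)" by simp
      thus ?thesis by (simp only: divide_minus_right minus_minus)
    qed
    ultimately show ?thesis using geometric_sum[OF nu, of K] u1n
      by simp
  qed
  have sb: "(\<Sum>n<K. w^n) = -2/(w-1)"
    using wK w1' unfolding w_def[symmetric] by (simp add: geometric_sum)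
  have sa': "(\<Sum>m\<in>{1..<K}. (-u)^m) = - (u - 1)/(u+1)"
    using sa sum_split0[OF K, of "\<lambda>m. (-u)^m"] u1n by (simp add: field_simps)
  have sb': "(\<Sum>n\<in>{1..<K}. w^n) = - (w + 1)/(w-1)"
    using sb sum_split0[OF K, of "\<lambda>n. w^n"] wmn by (simp add: field_simps)
  have "complex_of_real (tan y * cot x) = of_real (sin y) * of_real (cos x) / (of_real (cos y) * of_real (sin x))"
    by (simp add: tan_def cot_def)
  also have "\<dots> = (- (u - 1)/(u+1)) * (- (w + 1)/(w-1))"
    unfolding u1 um w1 wm using cy sx by (simp add: field_simps)
  finally show ?thesis using sa' sb' by (simp add: u_def w_def y_def)
qed

lemma nodvd:
  fixes h k j :: int
  assumes "coprime h k" "1 \<le> j" "j \<le> k - 1"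
  shows "\<not> k dvd h * j"
proof
  assume "k dvd h * j"
  hence "k dvd j" using assms(1) by (metis coprime_commute coprime_dvd_mult_right_iff)
  thus False using assms(2,3) zdvd_imp_le by fastforce
qed

lemma B1_alt: "B1 h k = (\<Sum>j\<in>{1..k-1}. sg (j + h*j div k) * (h*j div k))"
  unfolding B1_def floor_divide_of_int_eq pow_sg ..

lemma comb:
  fixes h k :: int
  assumes cop: "coprime h k" and k: "k > 0" and odd: "odd (h + k)"
  shows "2 * B1 h k = (h - 1) * (\<Sum>j\<in>{1..k-1}. sg (j + h*j div k))"
proof -
  define f where "f j = h*j div k" for j
  have rfl: "(\<Sum>j\<in>{1..k-1}. g j) = (\<Sum>j\<in>{1..k-1}. g (k - j))" for g :: "int \<Rightarrow> int"
    by (rule sum.reindex_bij_witness[of _ "\<lambda>j. k-j" "\<lambda>j. k-j"]) auto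
  have fr: "f (k - j) = h - f j - 1" and sr: "sg ((k-j) + f (k-j)) = sg (j + f j)"
    if j: "j \<in> {1..k-1}" for j
  proof -
    have nd: "\<not> k dvd h*j" using nodvd[OF cop] j by auto
    hence "(h*j) mod k \<noteq> 0" by auto
    have e: "h*(k-j) = -(h*j) + k * h" by (simp add: algebra_simps)
    have "(-(h*j) + k * h) div k = h + (-(h*j)) div k"
      by (rule div_mult_self2) (use k in simp)
    hence "f (k-j) = h + (-(h*j)) div k" unfolding f_def e .
    also have "(-(h*j)) div k = - (h*j div k) - 1"
      using zdiv_zminus1_eq_if[of k "h*j"] k \<open>(h*j) mod k \<noteq> 0\<close> by simp
    finally show fr1: "f (k - j) = h - f j - 1" unfolding f_def by simp
    have cc: "(k-j) + f (k-j) = (j + f j) + (k + h - 1 - 2*j - 2 * f j)" unfolding fr1 by simp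
    have "even (k + h - 1 - 2*j - 2 * f j)" using odd by simp
    hence "sg (k + h - 1 - 2*j - 2 * f j) = 1" by (simp add: sg_def)
    thus "sg ((k-j) + f (k-j)) = sg (j + f j)" by (simp only: cc sg_add mult_1_right)
  qed
  have B: "B1 h k = (\<Sum>j\<in>{1..k-1}. sg (j + f j) * f j)" unfolding B1_alt f_def ..
  also have "\<dots> = (\<Sum>j\<in>{1..k-1}. sg (j + f j) * (h - 1 - f j))"
  proof (subst rfl, rule sum.cong[OF refl])
    fix j assume j: "j \<in> {1..k-1}"
    show "sg ((k-j) + f (k-j)) * f (k-j) = sg (j + f j) * (h - 1 - f j)"
      unfolding sr[OF j] by (simp add: fr[OF j])
  qed
  also have "\<dots> = (h-1) * (\<Sum>j\<in>{1..k-1}. sg (j + f j)) - (\<Sum>j\<in>{1..k-1}. sg (j + f j) * f j)"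
    by (simp add: algebra_simps sum_distrib_left sum_subtractf sum.distrib)
  finally have "B1 h k = (h-1) * (\<Sum>j\<in>{1..k-1}. sg (j + f j)) - B1 h k" using B by simp
  thus ?thesis unfolding f_def by simp
qed


lemma pointconds:
  fixes h :: int and K i :: nat
  assumes K: "K > 0" and odd: "odd (h + int K)" and i: "i < K"
  defines "x \<equiv> pi * real (2*i+1) / (2 * real K)"
  shows "cos (of_int h * x) \<noteq> 0" "sin x \<noteq> 0"
    "(- cis (2*(of_int h*x)))^K = -1" "cis (2*x)^K = -1"
proof -
  have "0 < x" unfolding x_def using K by simp
  moreover have "x < pi"
  proof -
    have "real (2*i+1) < 2 * real K" using i by linarith
    hence "pi * real (2*i+1) < pi * (2 * real K)" by (simp add: pi_gt_zero)
    thus ?thesis unfolding x_def using K by (simp add: divide_less_eq)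
  qed
  ultimately show "sin x \<noteq> 0" using sin_gt_zero by fastforce
  show "cos (of_int h * x) \<noteq> 0"
  proof
    assume "cos (of_int h * x) = 0"
    then obtain n :: int where n: "of_int h * x = of_int n * pi + pi/2"
      by (auto simp: cos_zero_iff_int2)
    hence "of_int h * (pi * real (2*i+1)) = (of_int n * pi + pi/2) * (2 * real K)"
      unfolding x_def using K by (simp add: field_simps)
    hence "pi * (of_int h * real (2*i+1)) = pi * ((2*of_int n + 1) * real K)"
      by (simp add: algebra_simps)
    hence "of_int h * real (2*i+1) = (2*of_int n + 1) * real K" by simp
    hence "real_of_int (h * (2*int i+1)) = real_of_int ((2*n + 1) * int K)" by (simp add: algebra_simps)
    hence e: "h * (2*int i+1) = (2*n + 1) * int K" by (simp only: of_int_eq_iff)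
    have "even (h * (2*int i+1)) = even h" by simp
    moreover have "even ((2*n + 1) * int K) = even (int K)" by simp
    ultimately have "even h = even (int K)" using e by metis
    thus False using odd by simp
  qed
  have "(- cis (2*(of_int h*x)))^K = (-1)^K * cis (real K * (2*(of_int h*x)))"
    unfolding DeMoivre[symmetric] by (rule power_minus)
  also have "real K * (2*(of_int h*x)) = pi * of_int (h * (2*int i+1))"
    unfolding x_def using K by (simp add: field_simps)
  also have "cis (pi * of_int (h * (2*int i+1))) = (if even h then 1 else -1)"
    unfolding cis_ipi by simp
  finally have fin: "(- cis (2*(of_int h*x)))^K = (-1)^K * (if even h then 1 else -1)" .
  show "(- cis (2*(of_int h*x)))^K = -1"
  proof (cases "even h")
    case True
    hence "odd K" using odd by simp
    thus ?thesis using fin True by simp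
  next
    case False
    hence "even K" using odd by simp
    thus ?thesis using fin False by simp
  qed
  have "cis (2*x)^K = cis (pi * of_int (2*int i+1))"
    unfolding DeMoivre x_def using K by (rule_tac arg_cong[where f=cis]) (simp add: field_simps)
  also have "\<dots> = -1" unfolding cis_ipi by simp
  finally show "cis (2*x)^K = -1" .
qed
lemma inner:
  fixes h :: int and K m :: nat
  assumes K: "K > 0" and cop: "coprime h (int K)" and m: "m \<in> {1..<K}"
  shows "(\<Sum>n\<in>{1..<K}. (if int K dvd (h*int m + int n)
            then of_nat K * of_int (sg ((h*int m + int n) div int K)) else (0::complex)))
         = of_nat K * of_int (sg (h*int m div int K + 1))"
proof -
  define k where "k = int K"
  define r where "r = h * int m mod k"
  define q where "q = h * int m div k"
  have kp: "k > 0" using K k_def by simp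
  have nd: "\<not> k dvd h * int m" unfolding k_def using nodvd[OF cop, of "int m"] m by auto
  have hm: "h * int m = k * q + r" unfolding q_def r_def by simp
  have r0: "0 < r" using nd kp unfolding r_def
    by (metis dvd_eq_mod_eq_0 order_le_neq_trans pos_mod_sign)
  have rk: "r < k" using kp unfolding r_def by simp
  define n0 where "n0 = nat (k - r)"
  have n0i: "int n0 = k - r" unfolding n0_def using rk by simp
  have n0m: "n0 \<in> {1..<K}" using n0i r0 rk k_def by auto
  have key: "(if int K dvd (h*int m + int n)
            then of_nat K * of_int (sg ((h*int m + int n) div int K)) else (0::complex))
      = (if n = n0 then of_nat K * of_int (sg (q + 1)) else 0)" if n: "n \<in> {1..<K}" for n
  proof (cases "n = n0")
    case True
    have "h*int m + int n = k * (q + 1)" using True hm n0i by (simp add: algebra_simps)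
    thus ?thesis using True kp k_def by simp
  next
    case False
    have "\<not> k dvd (h*int m + int n)"
    proof
      assume "k dvd (h*int m + int n)"
      hence "k dvd (r + int n)" using hm by (metis dvd_add_right_iff dvd_triv_left add.assoc)
      then obtain t where t: "r + int n = k * t" by blast
      have "0 < k * t" using t r0 by simp
      hence "t > 0" using kp zero_less_mult_pos by blast
      moreover have s1: "r + int n < 2*k" using rk n k_def by auto
      have "k * t < k * 2" using t s1 by linarith
      hence "t < 2" using kp by (simp add: mult_less_cancel_left_pos)
      ultimately have "t = 1" by simp
      hence "int n = k - r" using t by simp
      thus False using False n0i by simp
    qed
    thus ?thesis using False k_def by simp
  qed
  have "(\<Sum>n\<in>{1..<K}. (if int K dvd (h*int m + int n)
            then of_nat K * of_int (sg ((h*int m + int n) div int K)) else (0::complex)))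
      = (\<Sum>n\<in>{1..<K}. (if n = n0 then of_nat K * of_int (sg (q + 1)) else 0))"
    by (rule sum.cong[OF refl]) (rule key)
  also have "\<dots> = of_nat K * of_int (sg (q + 1))" using n0m by simp
  finally show ?thesis unfolding q_def k_def .
qed

lemma negpow_sg: "(-1::complex) ^ m = of_int (sg (int m))"
  by (simp add: sg_def)

lemma trig_sum:
  fixes h :: int and K :: nat
  assumes K: "K > 0" and cop: "coprime h (int K)" and odd: "odd (h + int K)"
  shows "(\<Sum>i<K. complex_of_real (tan (of_int h * (pi * real (2*i+1) / (2*real K)))
              * cot (pi * real (2*i+1) / (2*real K))))
       = - of_nat K * of_int (\<Sum>m\<in>{1..<K}. sg (int m + h*int m div int K))"
proof -
  define x where "x i = pi * real (2*i+1) / (2*real K)" for i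
  define g where "g i m n = of_int (sg (int m)) * cis (pi * real (2*i+1) * of_int (h*int m + int n) / real K)" for i m n :: nat
  have step1: "complex_of_real (tan (of_int h * x i) * cot (x i)) = (\<Sum>m\<in>{1..<K}. \<Sum>n\<in>{1..<K}. g i m n)"
    if i: "i < K" for i
  proof -
    note pc = pointconds[OF K odd i, folded x_def]
    have "complex_of_real (tan (of_int h * x i) * cot (x i)) =
      (\<Sum>m\<in>{1..<K}. (- cis (2*(of_int h*x i)))^m) * (\<Sum>n\<in>{1..<K}. cis (2*x i)^n)"
      by (rule expand[OF K pc])
    also have "\<dots> = (\<Sum>m\<in>{1..<K}. \<Sum>n\<in>{1..<K}. (- cis (2*(of_int h*x i)))^m * cis (2*x i)^n)"
      by (rule sum_product)
    also have "\<dots> = (\<Sum>m\<in>{1..<K}. \<Sum>n\<in>{1..<K}. g i m n)"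
    proof (intro sum.cong refl)
      fix m n
      have "(- cis (2*(of_int h*x i)))^m * cis (2*x i)^n
          = (-1)^m * (cis (2*(of_int h*x i))^m * cis (2*x i)^n)"
        unfolding power_minus[of "cis (2*(of_int h*x i))" m] by (rule mult.assoc)
      also have "cis (2*(of_int h*x i))^m * cis (2*x i)^n
          = cis (pi * real (2*i+1) * of_int (h*int m + int n) / real K)"
        unfolding DeMoivre cis_mult x_def using K
        by (rule_tac arg_cong[where f=cis]) (simp add: field_simps)
      finally show "(- cis (2*(of_int h*x i)))^m * cis (2*x i)^n = g i m n"
        unfolding g_def negpow_sg .
    qed
    finally show ?thesis .
  qed
  have "(\<Sum>i<K. complex_of_real (tan (of_int h * x i) * cot (x i)))
      = (\<Sum>i<K. \<Sum>m\<in>{1..<K}. \<Sum>n\<in>{1..<K}. g i m n)"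
    by (rule sum.cong[OF refl]) (rule step1, simp)
  also have "\<dots> = (\<Sum>m\<in>{1..<K}. \<Sum>i<K. \<Sum>n\<in>{1..<K}. g i m n)"
    by (rule sum.swap)
  also have "\<dots> = (\<Sum>m\<in>{1..<K}. \<Sum>n\<in>{1..<K}. \<Sum>i<K. g i m n)"
    by (rule sum.cong[OF refl]) (rule sum.swap)
  also have "\<dots> = (\<Sum>m\<in>{1..<K}. of_int (sg (int m)) * (\<Sum>n\<in>{1..<K}.
        (if int K dvd (h*int m + int n)
            then of_nat K * of_int (sg ((h*int m + int n) div int K)) else (0::complex))))"
  proof (rule sum.cong[OF refl])
    fix m
    have "(\<Sum>n\<in>{1..<K}. \<Sum>i<K. g i m n) = (\<Sum>n\<in>{1..<K}. of_int (sg (int m)) * 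
        (if int K dvd (h*int m + int n)
            then of_nat K * of_int (sg ((h*int m + int n) div int K)) else (0::complex)))"
      by (rule sum.cong[OF refl]) (simp only: g_def sum_distrib_left[symmetric] Esum[OF K])
    thus "(\<Sum>n\<in>{1..<K}. \<Sum>i<K. g i m n) = of_int (sg (int m)) * (\<Sum>n\<in>{1..<K}.
        (if int K dvd (h*int m + int n)
            then of_nat K * of_int (sg ((h*int m + int n) div int K)) else (0::complex)))"
      by (simp only: sum_distrib_left)
  qed
  also have "\<dots> = (\<Sum>m\<in>{1..<K}. of_int (sg (int m)) * (of_nat K * of_int (sg (h*int m div int K + 1))))"
    by (rule sum.cong[OF refl]) (subst inner[OF K cop], simp_all)
  also have "\<dots> = (\<Sum>m\<in>{1..<K}. - of_nat K * of_int (sg (int m + h*int m div int K)))"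
  proof (rule sum.cong[OF refl])
    fix m :: nat
    have "sg (h*int m div int K + 1) = - sg (h*int m div int K)"
      by (simp add: sg_add sg_def)
    thus "of_int (sg (int m)) * (of_nat K * of_int (sg (h*int m div int K + 1))) =
        - of_nat K * (of_int (sg (int m + h*int m div int K)) :: complex)"
      by (simp add: sg_add)
  qed
  also have "\<dots> = - of_nat K * of_int (\<Sum>m\<in>{1..<K}. sg (int m + h*int m div int K))"
    by (simp add: sum_distrib_left)
  finally show ?thesis unfolding x_def .
qed

theorem theorem23:
  fixes h k :: int
  assumes "coprime h k" and "k > 0" and "odd (h + k)"
  shows "real_of_int (B1 h k) =
    (1 - real_of_int h) / (2 * real_of_int k) *
    (\<Sum>j\<in>{1..k}. tan (pi * real_of_int h * real_of_int (2*j - 1) / (2 * real_of_int k))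
                 * cot (pi * real_of_int (2*j - 1) / (2 * real_of_int k)))"
proof -
  define K where "K = nat k"
  have kK: "k = int K" using assms(2) K_def by simp
  have K: "K > 0" using assms(2) K_def by simp
  have cop: "coprime h (int K)" using assms(1) kK by simp
  have odd: "odd (h + int K)" using assms(3) kK by simp
  define C where "C = (\<Sum>m\<in>{1..<K}. sg (int m + h*int m div int K))"
  define F where "F j = tan (pi * real_of_int h * real_of_int (2*j - 1) / (2 * real_of_int k))
                 * cot (pi * real_of_int (2*j - 1) / (2 * real_of_int k))" for j
  have S1: "(\<Sum>j\<in>{1..k}. F j) = (\<Sum>i<K. F (int i + 1))"
    by (rule sum.reindex_bij_witness[of _ "\<lambda>i. int i + 1" "\<lambda>j. nat (j-1)"]) (auto simp: kK)
  have S2: "F (int i + 1) = tan (of_int h * (pi * real (2*i+1) / (2*real K)))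
              * cot (pi * real (2*i+1) / (2*real K))" for i
  proof -
    have "real_of_int (2*(int i + 1) - 1) = real (2*i+1)" by simp
    thus ?thesis unfolding F_def kK by (simp add: ac_simps)
  qed
  have "complex_of_real (\<Sum>j\<in>{1..k}. F j) = - of_nat K * of_int C"
    unfolding S1 S2 of_real_sum C_def by (rule trig_sum[OF K cop odd])
  also have "- of_nat K * of_int C = complex_of_real (- real K * of_int C)" by simp
  finally have S: "(\<Sum>j\<in>{1..k}. F j) = - real K * of_int C"
    by (simp only: of_real_eq_iff)
  have C2: "(\<Sum>j\<in>{1..k-1}. sg (j + h*j div k)) = C"
    unfolding C_def kK
    by (rule sum.reindex_bij_witness[of _ "\<lambda>j. int j" "\<lambda>i. nat i"]) auto
  have B: "2 * B1 h k = (h - 1) * C" using comb[OF assms] C2 by simp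
  have "2 * real_of_int (B1 h k) = (real_of_int h - 1) * of_int C"
    using arg_cong[OF B, of real_of_int] by simp
  hence BB: "real_of_int (B1 h k) = (real_of_int h - 1) * of_int C / 2" by linarith
  have RR: "(1 - real_of_int h) / (2 * real_of_int k) * (- real K * of_int C)
     = (real_of_int h - 1) * of_int C / 2"
  proof -
    have Kn: "real K \<noteq> 0" using K by simp
    show ?thesis unfolding kK of_int_of_nat_eq using Kn
      by (simp add: field_simps)
  qed
  show ?thesis unfolding F_def[symmetric] S RR by (rule BB)
qed


end
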